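(* Let $m\in\mathbb N_0$, $0<\alpha<1$, and $f,g\in E^{m,\alpha}(B_a)$. Then (i) $f+g\in E^{m,\alpha}(B_a)$; (ii) $fg\in E^{m,\alpha}(B_a)$; (iii) if $f\neq0$ at every point of $B_a$, then $1/f\in E^{m,\alpha}(B_a)$. The same three statements hold with $E^{m,\alpha}(B_a)$ replaced by $E^\infty(B_a)$.
   Context: $B_a\subset\mathbb R^3$ is the open ball of radius $a$ centered at the origin, $r=|x|$. $C^{m,\alpha}(B_a)$ denotes functions with derivatives up to order $m$ that are $\alpha$-Hölder continuous on compact subsets of $B_a$. $E^{m,\alpha}(B_a)=\{f=f_1+rf_2:\ f_1,f_2\in C^{m,\alpha}(B_a)\}$ and $E^\infty(B_a)=\{f=f_1+rf_2:\ f_1,f_2\in C^\infty(B_a)\}$. *)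

theory Defs
  imports "HOL-Analysis.Analysis"
begin

definition pderiv3 :: "3 \<Rightarrow> (real^3 \<Rightarrow> real) \<Rightarrow> real^3 \<Rightarrow> real" where
  "pderiv3 i f x = frechet_derivative f (at x) (axis i 1)"

fun pderivs3 :: "3 list \<Rightarrow> (real^3 \<Rightarrow> real) \<Rightarrow> real^3 \<Rightarrow> real" where
  "pderivs3 [] f = f"
| "pderivs3 (i # is) f = pderiv3 i (pderivs3 is f)"

definition loc_holder :: "real \<Rightarrow> (real^3) set \<Rightarrow> (real^3 \<Rightarrow> real) \<Rightarrow> bool" where
  "loc_holder \<alpha> S h \<longleftrightarrow>
     (\<forall>K. compact K \<and> K \<subseteq> S \<longrightarrow>
        (\<exists>C. \<forall>x\<in>K. \<forall>y\<in>K. \<bar>h x - h y\<bar> \<le> C * dist x y powr \<alpha>))"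

definition C_holder :: "nat \<Rightarrow> real \<Rightarrow> (real^3) set \<Rightarrow> (real^3 \<Rightarrow> real) \<Rightarrow> bool" where
  "C_holder m \<alpha> S f \<longleftrightarrow>
     (\<forall>is. length is < m \<longrightarrow> (\<forall>x\<in>S. pderivs3 is f differentiable (at x))) \<and>
     (\<forall>is. length is \<le> m \<longrightarrow> loc_holder \<alpha> S (pderivs3 is f))"

definition C_inf :: "(real^3) set \<Rightarrow> (real^3 \<Rightarrow> real) \<Rightarrow> bool" where
  "C_inf S f \<longleftrightarrow> (\<forall>is. \<forall>x\<in>S. pderivs3 is f differentiable (at x))"

definition E_holder :: "nat \<Rightarrow> real \<Rightarrow> real \<Rightarrow> (real^3 \<Rightarrow> real) \<Rightarrow> bool" where
  "E_holder m \<alpha> a f \<longleftrightarrow>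
     (\<exists>f1 f2. C_holder m \<alpha> (ball 0 a) f1 \<and> C_holder m \<alpha> (ball 0 a) f2 \<and>
        (\<forall>x\<in>ball 0 a. f x = f1 x + norm x * f2 x))"

definition E_inf :: "real \<Rightarrow> (real^3 \<Rightarrow> real) \<Rightarrow> bool" where
  "E_inf a f \<longleftrightarrow>
     (\<exists>f1 f2. C_inf (ball 0 a) f1 \<and> C_inf (ball 0 a) f2 \<and>
        (\<forall>x\<in>ball 0 a. f x = f1 x + norm x * f2 x))"

end

theory Submission
  imports Defs "HOL-Computational_Algebra.Polynomial"
begin

lemma pderivs3_append: "pderivs3 (is @ [i]) f = pderivs3 is (pderiv3 i f)"
  by (induction "is") auto

lemma pderiv3_has: "(f has_derivative D) (at x) \<Longrightarrow> pderiv3 i f x = D (axis i 1)"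
  unfolding pderiv3_def using frechet_derivative_at by metis

lemma pderiv3_cong:
  assumes "open S" "x \<in> S" "\<And>y. y \<in> S \<Longrightarrow> f y = g y"
  shows "pderiv3 i f x = pderiv3 i g x"
proof -
  have "(\<lambda>f'. (f has_derivative f') (at x)) = (\<lambda>f'. (g has_derivative f') (at x))"
  proof
    fix f'
    show "(f has_derivative f') (at x) = (g has_derivative f') (at x)"
      using has_derivative_transform_within_open[OF _ assms(1,2), of f f' UNIV g]
        has_derivative_transform_within_open[OF _ assms(1,2), of g f' UNIV f] assms(3)
      by auto
  qed
  then show ?thesis unfolding pderiv3_def frechet_derivative_def by simp
qed

lemma pderivs3_cong:
  assumes "open S" "\<And>y. y \<in> S \<Longrightarrow> f y = g y"
  shows "x \<in> S \<Longrightarrow> pderivs3 is f x = pderivs3 is g x"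
proof (induction "is" arbitrary: x)
  case Nil then show ?case using assms by simp
next
  case (Cons i "is")
  show ?case using pderiv3_cong[OF assms(1) Cons.prems Cons.IH] by simp
qed

lemma differentiable_cong_open:
  assumes "open S" "x \<in> S" "\<And>y. y \<in> S \<Longrightarrow> f y = g y" "f differentiable (at x)"
  shows "g differentiable (at x)"
  using assms has_derivative_transform_within_open unfolding differentiable_def by blast

lemma fdw: "f differentiable (at x) \<Longrightarrow> (f has_derivative frechet_derivative f (at x)) (at x)"
  using frechet_derivative_works by blast

lemma pd_eq: "pderiv3 i f x = frechet_derivative f (at x) (axis i 1)"
  unfolding pderiv3_def by simp

lemma pd_add: "f differentiable (at x) \<Longrightarrow> g differentiable (at x) \<Longrightarrow>
   pderiv3 i (\<lambda>x. f x + g x) x = pderiv3 i f x + pderiv3 i g x"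
  by (subst pderiv3_has[OF has_derivative_add[OF fdw fdw]]) (auto simp: pd_eq)

lemma pd_mult: "f differentiable (at x) \<Longrightarrow> g differentiable (at x) \<Longrightarrow>
   pderiv3 i (\<lambda>x. f x * g x) x = f x * pderiv3 i g x + pderiv3 i f x * g x"
  by (subst pderiv3_has[OF has_derivative_mult[OF fdw fdw]]) (auto simp: pd_eq)

lemma pd_inv: "f differentiable (at x) \<Longrightarrow> f x \<noteq> 0 \<Longrightarrow>
   pderiv3 i (\<lambda>x. inverse (f x :: real)) x = - (inverse (f x) * pderiv3 i f x * inverse (f x))"
  by (subst pderiv3_has[OF Deriv.has_derivative_inverse[OF _ fdw]]) (auto simp: pd_eq)

lemma pd_comp: "f differentiable (at x) \<Longrightarrow> (\<phi> has_real_derivative d) (at (f x)) \<Longrightarrow>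
   pderiv3 i (\<lambda>x. \<phi> (f x)) x = d * pderiv3 i f x"
proof -
  assume a1: "f differentiable (at x)" and a2: "(\<phi> has_real_derivative d) (at (f x))"
  have "((\<lambda>x. \<phi> (f x)) has_derivative (\<lambda>h. d * frechet_derivative f (at x) h)) (at x)"
    using has_derivative_compose[OF fdw[OF a1] a2[unfolded has_field_derivative_def]] by simp
  from pderiv3_has[OF this, of i] show ?thesis by (simp add: pd_eq)
qed

lemma pd_const: "pderiv3 i (\<lambda>x. c) x = 0"
  by (subst pderiv3_has[OF has_derivative_const]) simp

lemma pd_const_fun: "pderiv3 i (\<lambda>x. c) = (\<lambda>x. 0)"
  by (rule ext) (rule pd_const)

lemma pd_coord: "pderiv3 i (\<lambda>x. x $ j) x = (if j = i then 1 else 0)"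
  by (subst pderiv3_has[OF bounded_linear.has_derivative[OF bounded_linear_vec_nth has_derivative_ident]])
     (simp add: axis_def)

lemma diff_comp: "f differentiable (at x) \<Longrightarrow> (\<phi> has_real_derivative d) (at (f x)) \<Longrightarrow>
   (\<lambda>x. \<phi> (f x)) differentiable (at x)"
  unfolding differentiable_def has_field_derivative_def using has_derivative_compose by blast

lemma pd_coord_fun: "pderiv3 i (\<lambda>x. x $ j) = (\<lambda>x. if j = i then 1 else 0)"
  by (rule ext) (rule pd_coord)

lemma diff_coord: "(\<lambda>x. x $ j) differentiable (at x)"
  using bounded_linear_imp_differentiable[OF bounded_linear_vec_nth] by blast

locale Qloc =
  fixes P :: "(real^3 \<Rightarrow> real) \<Rightarrow> bool" and a :: real
  assumes P_cong: "P f \<Longrightarrow> (\<And>x. x \<in> ball 0 a \<Longrightarrow> f x = g x) \<Longrightarrow> P g"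
    and P_add: "P f \<Longrightarrow> P g \<Longrightarrow> P (\<lambda>x. f x + g x)"
    and P_mult: "P f \<Longrightarrow> P g \<Longrightarrow> P (\<lambda>x. f x * g x)"
    and P_inv: "P f \<Longrightarrow> (\<And>x. x \<in> ball 0 a \<Longrightarrow> f x \<noteq> 0) \<Longrightarrow> P (\<lambda>x. inverse (f x))"
    and P_const: "P (\<lambda>x. c)"
    and P_coord: "P (\<lambda>x. x $ j)"
    and P_comp: "P f \<Longrightarrow> convex U \<Longrightarrow> open U \<Longrightarrow> f ` ball 0 a \<subseteq> U \<Longrightarrow>
        (\<And>s. s \<in> U \<Longrightarrow> (\<phi> has_real_derivative \<phi>' s) (at s)) \<Longrightarrow> continuous_on U \<phi>' \<Longrightarrow>
        P (\<lambda>x. \<phi> (f x))"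
begin

definition Q :: "nat \<Rightarrow> (real^3 \<Rightarrow> real) \<Rightarrow> bool" where
  "Q m f \<longleftrightarrow> (\<forall>is. length is < m \<longrightarrow> (\<forall>x\<in>ball 0 a. pderivs3 is f differentiable (at x))) \<and>
     (\<forall>is. length is \<le> m \<longrightarrow> P (pderivs3 is f))"

lemma Q_0: "Q 0 f \<longleftrightarrow> P f"
  unfolding Q_def by simp

lemma Q_Suc: "Q (Suc m) f \<longleftrightarrow> (\<forall>x\<in>ball 0 a. f differentiable (at x)) \<and> P f \<and> (\<forall>i. Q m (pderiv3 i f))"
proof
  assume H: "Q (Suc m) f"
  have "\<forall>x\<in>ball 0 a. f differentiable (at x)" using H unfolding Q_def
    by (metis pderivs3.simps(1) zero_less_Suc list.size(3))
  moreover have "P f" using H unfolding Q_def by (metis le0 list.size(3) pderivs3.simps(1))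
  moreover have "Q m (pderiv3 i f)" for i
    using H unfolding Q_def by (metis pderivs3_append length_append_singleton Suc_less_eq Suc_le_mono)
  ultimately show "(\<forall>x\<in>ball 0 a. f differentiable (at x)) \<and> P f \<and> (\<forall>i. Q m (pderiv3 i f))" by blast
next
  assume H: "(\<forall>x\<in>ball 0 a. f differentiable (at x)) \<and> P f \<and> (\<forall>i. Q m (pderiv3 i f))"
  show "Q (Suc m) f" unfolding Q_def
  proof (intro conjI allI impI)
    fix "is" :: "3 list" assume L: "length is < Suc m"
    show "\<forall>x\<in>ball 0 a. pderivs3 is f differentiable (at x)"
    proof (cases "is" rule: rev_cases)
      case Nil then show ?thesis using H by simp
    next
      case (snoc js i) then show ?thesis using H L unfolding Q_def by (simp add: pderivs3_append)
    qed
  next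
    fix "is" :: "3 list" assume L: "length is \<le> Suc m"
    show "P (pderivs3 is f)"
    proof (cases "is" rule: rev_cases)
      case Nil then show ?thesis using H by simp
    next
      case (snoc js i) then show ?thesis using H L unfolding Q_def by (simp add: pderivs3_append)
    qed
  qed
qed

lemma Q_mono: "Q (Suc m) f \<Longrightarrow> Q m f"
  unfolding Q_def by auto

lemma Q_cong: "Q m f \<Longrightarrow> (\<And>x. x \<in> ball 0 a \<Longrightarrow> f x = g x) \<Longrightarrow> Q m g"
  unfolding Q_def
proof (intro conjI allI impI ballI, goal_cases)
  case (1 "is" x)
  have "pderivs3 is f differentiable (at x)" using 1 by auto
  moreover have "\<And>y. y \<in> ball 0 a \<Longrightarrow> pderivs3 is f y = pderivs3 is g y"
    using pderivs3_cong[OF open_ball[of 0 a], where f=f and g=g] 1 by blast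
  ultimately show ?case using differentiable_cong_open[OF open_ball \<open>x \<in> ball 0 a\<close>, of "pderivs3 is f" "pderivs3 is g"]
    by blast
next
  case (2 "is")
  have "\<And>y. y \<in> ball 0 a \<Longrightarrow> pderivs3 is f y = pderivs3 is g y"
    using pderivs3_cong[OF open_ball[of 0 a], where f=f and g=g] 2 by blast
  then show ?case using P_cong[of "pderivs3 is f" "pderivs3 is g"] 2 by auto
qed


lemma Q_add: "Q m f \<Longrightarrow> Q m g \<Longrightarrow> Q m (\<lambda>x. f x + g x)"
proof (induction m arbitrary: f g)
  case 0 then show ?case by (simp add: Q_0 P_add)
next
  case (Suc m)
  show ?case unfolding Q_Suc
  proof (intro conjI allI ballI)
    fix i
    have "Q m (\<lambda>x. pderiv3 i f x + pderiv3 i g x)" using Suc by (simp add: Q_Suc)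
    then show "Q m (pderiv3 i (\<lambda>x. f x + g x))"
      by (rule Q_cong) (use Suc in \<open>auto simp: Q_Suc pd_add\<close>)
  qed (use Suc in \<open>auto simp: Q_Suc P_add\<close>)
qed

lemma Q_const: "Q m (\<lambda>x. c)"
proof (induction m arbitrary: c)
  case 0 then show ?case by (simp add: Q_0 P_const)
next
  case (Suc m) then show ?case by (simp add: Q_Suc P_const pd_const_fun)
qed

lemma Q_coord: "Q m (\<lambda>x. x $ j)"
proof (induction m)
  case 0 then show ?case by (simp add: Q_0 P_coord)
next
  case (Suc m) then show ?case
    by (simp add: Q_Suc P_coord pd_coord_fun Q_const diff_coord)
qed

lemma Q_diff: "Q m f \<Longrightarrow> x \<in> ball 0 a \<Longrightarrow> f differentiable (at x) \<or> m = 0"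
  by (cases m) (auto simp: Q_Suc)

lemma Q_mult: "Q m f \<Longrightarrow> Q m g \<Longrightarrow> Q m (\<lambda>x. f x * g x)"
proof (induction m arbitrary: f g)
  case 0 then show ?case by (simp add: Q_0 P_mult)
next
  case (Suc m)
  show ?case unfolding Q_Suc
  proof (intro conjI allI ballI)
    fix i
    have "Q m (\<lambda>x. f x * pderiv3 i g x + pderiv3 i f x * g x)"
      using Suc Q_mono[OF Suc.prems(1)] Q_mono[OF Suc.prems(2)] by (intro Q_add Suc.IH) (auto simp: Q_Suc)
    then show "Q m (pderiv3 i (\<lambda>x. f x * g x))"
      by (rule Q_cong) (use Suc in \<open>auto simp: Q_Suc pd_mult\<close>)
  qed (use Suc in \<open>auto simp: Q_Suc P_mult\<close>)
qed

lemma Q_uminus: "Q m f \<Longrightarrow> Q m (\<lambda>x. - f x)"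
  using Q_mult[OF Q_const[of m "-1"]] by simp

lemma Q_minus: "Q m f \<Longrightarrow> Q m g \<Longrightarrow> Q m (\<lambda>x. f x - g x)"
  using Q_add[OF _ Q_uminus] by simp

lemma Q_inv: "Q m f \<Longrightarrow> (\<And>x. x \<in> ball 0 a \<Longrightarrow> f x \<noteq> 0) \<Longrightarrow> Q m (\<lambda>x. inverse (f x))"
proof (induction m arbitrary: f)
  case 0 then show ?case unfolding Q_0 using P_inv[of f] by blast
next
  case (Suc m)
  show ?case unfolding Q_Suc
  proof (intro conjI allI ballI)
    fix i
    have "Q m (\<lambda>x. - (inverse (f x) * pderiv3 i f x * inverse (f x)))"
      using Suc Q_mono[OF Suc.prems(1)] by (intro Q_uminus Q_mult Suc.IH) (auto simp: Q_Suc)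
    then show "Q m (pderiv3 i (\<lambda>x. inverse (f x)))"
      by (rule Q_cong) (use Suc in \<open>auto simp: Q_Suc pd_inv\<close>)
  next
    show "P (\<lambda>x. inverse (f x))" using Suc by (auto simp: Q_Suc intro: P_inv)
  next
    fix x :: "real^3" assume "x \<in> ball 0 a"
    then show "(\<lambda>x. inverse (f x)) differentiable (at x)"
      using Suc.prems by (auto simp: Q_Suc intro!: derivative_intros)
  qed
qed

lemma Q_comp:
  assumes U: "convex U" "open U"
  shows "Q m f \<Longrightarrow> f ` ball 0 a \<subseteq> U \<Longrightarrow>
    (\<And>n s. s \<in> U \<Longrightarrow> (\<phi>s n has_real_derivative \<phi>s (Suc n) s) (at s)) \<Longrightarrow>
    Q m (\<lambda>x. \<phi>s 0 (f x))"
proof (induction m arbitrary: f \<phi>s)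
  case 0
  have c: "continuous_on U (\<phi>s 1)"
    by (intro continuous_at_imp_continuous_on ballI DERIV_isCont) (rule 0(3)[of _ 1])
  have "P f" using 0(1) by (simp add: Q_0)
  from P_comp[OF this U 0(2) _ c, of "\<phi>s 0"] 0(3)[of _ 0]
  show ?case by (simp add: Q_0)
next
  case (Suc m)
  have Pf: "P f" and df: "\<forall>x\<in>ball 0 a. f differentiable (at x)" and dQ: "\<And>i. Q m (pderiv3 i f)"
    using Suc.prems(1) unfolding Q_Suc by auto
  show ?case unfolding Q_Suc
  proof (intro conjI allI ballI)
    fix i
    have "Q m (\<lambda>x. (\<lambda>n. \<phi>s (Suc n)) 0 (f x))"
      by (rule Suc.IH[OF Q_mono[OF Suc.prems(1)] Suc.prems(2)]) (rule Suc.prems(3))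
    then have "Q m (\<lambda>x. \<phi>s 1 (f x) * pderiv3 i f x)"
      using Q_mult[OF _ dQ[of i]] by simp
    then show "Q m (pderiv3 i (\<lambda>x. \<phi>s 0 (f x)))"
    proof (rule Q_cong)
      fix x :: "real^3" assume x: "x \<in> ball 0 a"
      then have "f x \<in> U" using Suc.prems(2) by blast
      then show "\<phi>s 1 (f x) * pderiv3 i f x = pderiv3 i (\<lambda>x. \<phi>s 0 (f x)) x"
        using pd_comp[of f x "\<phi>s 0" "\<phi>s 1 (f x)" i] df x Suc.prems(3)[of "f x" 0] by simp
    qed
  next
    have c: "continuous_on U (\<phi>s 1)"
      by (intro continuous_at_imp_continuous_on ballI DERIV_isCont) (rule Suc.prems(3)[of _ 1])
    from P_comp[OF Pf U Suc.prems(2) _ c, of "\<phi>s 0"] Suc.prems(3)[of _ 0]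
    show "P (\<lambda>x. \<phi>s 0 (f x))" by simp
  next
    fix x :: "real^3" assume x: "x \<in> ball 0 a"
    then have "f x \<in> U" using Suc.prems(2) by blast
    then show "(\<lambda>x. \<phi>s 0 (f x)) differentiable (at x)"
      using diff_comp[of f x "\<phi>s 0"] df x Suc.prems(3)[of "f x" 0] by blast
  qed
qed

end


lemma holder_nonneg:
  assumes "loc_holder \<alpha> S h" "compact K" "K \<subseteq> S"
  shows "\<exists>C\<ge>0. \<forall>x\<in>K. \<forall>y\<in>K. \<bar>h x - h y\<bar> \<le> C * dist x y powr \<alpha>"
proof -
  obtain C where C: "\<forall>x\<in>K. \<forall>y\<in>K. \<bar>h x - h y\<bar> \<le> C * dist x y powr \<alpha>"
    using assms unfolding loc_holder_def by blast
  have "\<bar>h x - h y\<bar> \<le> max C 0 * dist x y powr \<alpha>" if "x \<in> K" "y \<in> K" for x y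
  proof -
    have "C * dist x y powr \<alpha> \<le> max C 0 * dist x y powr \<alpha>"
      by (intro mult_right_mono) auto
    then show ?thesis using C that by fastforce
  qed
  then show ?thesis by (intro exI[of _ "max C 0"]) auto
qed

lemma holder_cont:
  assumes "loc_holder \<alpha> S h" "compact K" "K \<subseteq> S" "0 < \<alpha>"
  shows "continuous_on K h"
proof -
  obtain C where C0: "C \<ge> 0" and C: "\<forall>x\<in>K. \<forall>y\<in>K. \<bar>h x - h y\<bar> \<le> C * dist x y powr \<alpha>"
    using holder_nonneg[OF assms(1-3)] by blast
  show ?thesis unfolding continuous_on_iff
  proof (intro ballI allI impI)
    fix x e assume x: "x \<in> K" and e: "(0::real) < e"
    define d where "d = (e / (C + 1)) powr (1 / \<alpha>)"
    have d: "d > 0" using e C0 by (simp add: d_def)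
    show "\<exists>d>0. \<forall>x'\<in>K. dist x' x < d \<longrightarrow> dist (h x') (h x) < e"
    proof (intro exI[of _ d] conjI ballI impI d)
      fix y assume y: "y \<in> K" and dy: "dist y x < d"
      have "dist y x powr \<alpha> \<le> d powr \<alpha>"
        using dy assms(4) by (intro powr_mono2) auto
      also have "\<dots> = e / (C + 1)" unfolding d_def using e C0 assms(4)
        by (simp add: powr_powr)
      finally have 1: "dist y x powr \<alpha> \<le> e / (C + 1)" .
      have "dist (h y) (h x) \<le> C * dist y x powr \<alpha>" using C x y by (simp add: dist_real_def)
      also have "\<dots> \<le> C * (e / (C + 1))" using 1 C0 by (intro mult_left_mono) auto
      also have "\<dots> < e" using C0 e by (simp add: field_simps)
      finally show "dist (h y) (h x) < e" .
    qed
  qed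
qed

lemma holder_bounded:
  assumes "loc_holder \<alpha> S h" "compact K" "K \<subseteq> S" "0 < \<alpha>"
  shows "\<exists>B\<ge>0. \<forall>x\<in>K. \<bar>h x\<bar> \<le> B"
proof -
  have "compact (h ` K)" using holder_cont[OF assms] assms(2) by (rule compact_continuous_image)
  then obtain B where "\<forall>y\<in>h ` K. norm y \<le> B" using compact_imp_bounded bounded_iff by metis
  then show ?thesis by (intro exI[of _ "max B 0"]) auto
qed

lemma holder_cont_open:
  assumes "loc_holder \<alpha> S h" "open S" "0 < \<alpha>"
  shows "continuous_on S h"
proof -
  have "isCont h x" if x: "x \<in> S" for x
  proof -
    obtain e where e: "e > 0" "cball x e \<subseteq> S" using assms(2) x open_contains_cball by blast
    have "continuous_on (cball x e) h" using holder_cont[OF assms(1) _ e(2) assms(3)] by simp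
    then show ?thesis using e(1) continuous_on_interior[of "cball x e" h x] by simp
  qed
  then show ?thesis by (simp add: continuous_at_imp_continuous_on)
qed

lemma dist_le_holder:
  fixes K :: "(real^3) set"
  assumes "compact K" "0 < \<alpha>" "\<alpha> \<le> 1"
  shows "\<exists>C\<ge>0. \<forall>x\<in>K. \<forall>y\<in>K. dist x y \<le> C * dist x y powr \<alpha>"
proof -
  have bK: "bounded K" using assms(1) compact_imp_bounded by blast
  define D where "D = diameter K"
  have "dist x y \<le> D powr (1 - \<alpha>) * dist x y powr \<alpha>" if "x \<in> K" "y \<in> K" for x y
  proof (cases "dist x y = 0")
    case True then show ?thesis by simp
  next
    case False
    then have dp: "dist x y > 0" by simp
    have dD: "dist x y \<le> D" unfolding D_def using diameter_bounded_bound[OF bK that] .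
    have "dist x y = dist x y powr (1 - \<alpha>) * dist x y powr \<alpha>"
      using dp by (simp add: powr_add[symmetric])
    also have "\<dots> \<le> D powr (1 - \<alpha>) * dist x y powr \<alpha>"
      using dD dp assms by (intro mult_right_mono powr_mono2) auto
    finally show ?thesis .
  qed
  then show ?thesis by (intro exI[of _ "D powr (1 - \<alpha>)"]) auto
qed

lemma holder_Qloc:
  assumes a0: "0 < \<alpha>" and a1: "\<alpha> \<le> 1"
  shows "Qloc (loc_holder \<alpha> (ball 0 a)) a"
proof
  fix f g :: "real^3 \<Rightarrow> real"
  assume "loc_holder \<alpha> (ball 0 a) f" "\<And>x. x \<in> ball 0 a \<Longrightarrow> f x = g x"
  then show "loc_holder \<alpha> (ball 0 a) g" unfolding loc_holder_def
    by (metis subsetD)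
next
  fix f g :: "real^3 \<Rightarrow> real"
  assume F: "loc_holder \<alpha> (ball 0 a) f" and G: "loc_holder \<alpha> (ball 0 a) g"
  show "loc_holder \<alpha> (ball 0 a) (\<lambda>x. f x + g x)" unfolding loc_holder_def
  proof (intro allI impI)
    fix K :: "(real^3) set" assume K: "compact K \<and> K \<subseteq> ball 0 a"
    obtain C1 where C1: "C1 \<ge> 0" "\<forall>x\<in>K. \<forall>y\<in>K. \<bar>f x - f y\<bar> \<le> C1 * dist x y powr \<alpha>"
      using holder_nonneg[OF F] K by blast
    obtain C2 where C2: "C2 \<ge> 0" "\<forall>x\<in>K. \<forall>y\<in>K. \<bar>g x - g y\<bar> \<le> C2 * dist x y powr \<alpha>"
      using holder_nonneg[OF G] K by blast
    have "\<bar>f x + g x - (f y + g y)\<bar> \<le> (C1 + C2) * dist x y powr \<alpha>" if "x \<in> K" "y \<in> K" for x y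
    proof -
      have "\<bar>f x + g x - (f y + g y)\<bar> \<le> \<bar>f x - f y\<bar> + \<bar>g x - g y\<bar>" by linarith
      also have "\<dots> \<le> C1 * dist x y powr \<alpha> + C2 * dist x y powr \<alpha>"
        using C1(2) C2(2) that by (intro add_mono) auto
      finally show ?thesis by (simp add: distrib_right)
    qed
    then show "\<exists>C. \<forall>x\<in>K. \<forall>y\<in>K. \<bar>f x + g x - (f y + g y)\<bar> \<le> C * dist x y powr \<alpha>" by blast
  qed
next
  fix f g :: "real^3 \<Rightarrow> real"
  assume F: "loc_holder \<alpha> (ball 0 a) f" and G: "loc_holder \<alpha> (ball 0 a) g"
  show "loc_holder \<alpha> (ball 0 a) (\<lambda>x. f x * g x)" unfolding loc_holder_def
  proof (intro allI impI)
    fix K :: "(real^3) set" assume K: "compact K \<and> K \<subseteq> ball 0 a"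
    obtain C1 where C1: "C1 \<ge> 0" "\<forall>x\<in>K. \<forall>y\<in>K. \<bar>f x - f y\<bar> \<le> C1 * dist x y powr \<alpha>"
      using holder_nonneg[OF F] K by blast
    obtain C2 where C2: "C2 \<ge> 0" "\<forall>x\<in>K. \<forall>y\<in>K. \<bar>g x - g y\<bar> \<le> C2 * dist x y powr \<alpha>"
      using holder_nonneg[OF G] K by blast
    obtain B1 where B1: "B1 \<ge> 0" "\<forall>x\<in>K. \<bar>f x\<bar> \<le> B1" using holder_bounded[OF F _ _ a0] K by blast
    obtain B2 where B2: "B2 \<ge> 0" "\<forall>x\<in>K. \<bar>g x\<bar> \<le> B2" using holder_bounded[OF G _ _ a0] K by blast
    have "\<bar>f x * g x - f y * g y\<bar> \<le> (B1 * C2 + B2 * C1) * dist x y powr \<alpha>" if x: "x \<in> K" and y: "y \<in> K" for x y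
    proof -
      have "f x * g x - f y * g y = f x * (g x - g y) + g y * (f x - f y)" by (simp add: algebra_simps)
      then have "\<bar>f x * g x - f y * g y\<bar> \<le> \<bar>f x\<bar> * \<bar>g x - g y\<bar> + \<bar>g y\<bar> * \<bar>f x - f y\<bar>"
        by (metis abs_mult abs_triangle_ineq)
      also have "\<dots> \<le> B1 * (C2 * dist x y powr \<alpha>) + B2 * (C1 * dist x y powr \<alpha>)"
        using B1 B2 C1 C2 x y by (intro add_mono mult_mono) auto
      finally show ?thesis by (simp add: algebra_simps)
    qed
    then show "\<exists>C. \<forall>x\<in>K. \<forall>y\<in>K. \<bar>f x * g x - f y * g y\<bar> \<le> C * dist x y powr \<alpha>" by blast
  qed
next
  fix f :: "real^3 \<Rightarrow> real"
  assume F: "loc_holder \<alpha> (ball 0 a) f" and nz: "\<And>x. x \<in> ball 0 a \<Longrightarrow> f x \<noteq> 0"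
  show "loc_holder \<alpha> (ball 0 a) (\<lambda>x. inverse (f x))" unfolding loc_holder_def
  proof (intro allI impI)
    fix K :: "(real^3) set" assume K: "compact K \<and> K \<subseteq> ball 0 a"
    obtain C1 where C1: "C1 \<ge> 0" "\<forall>x\<in>K. \<forall>y\<in>K. \<bar>f x - f y\<bar> \<le> C1 * dist x y powr \<alpha>"
      using holder_nonneg[OF F] K by blast
    show "\<exists>C. \<forall>x\<in>K. \<forall>y\<in>K. \<bar>inverse (f x) - inverse (f y)\<bar> \<le> C * dist x y powr \<alpha>"
    proof (cases "K = {}")
      case True then show ?thesis by auto
    next
      case False
      have cK: "continuous_on K (\<lambda>x. \<bar>f x\<bar>)"
        using holder_cont[OF F _ _ a0] K by (intro continuous_intros) auto
      obtain z where z: "z \<in> K" "\<forall>x\<in>K. \<bar>f z\<bar> \<le> \<bar>f x\<bar>"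
        using continuous_attains_inf[OF _ False cK] K by blast
      define \<mu> where "\<mu> = \<bar>f z\<bar>"
      have mu: "\<mu> > 0" using nz z K unfolding \<mu>_def by auto
      have "\<bar>inverse (f x) - inverse (f y)\<bar> \<le> (C1 / \<mu>^2) * dist x y powr \<alpha>" if x: "x \<in> K" and y: "y \<in> K" for x y
      proof -
        have fx: "f x \<noteq> 0" "f y \<noteq> 0" using nz x y K by auto
        have "\<bar>inverse (f x) - inverse (f y)\<bar> = \<bar>f x - f y\<bar> / (\<bar>f x\<bar> * \<bar>f y\<bar>)"
          using fx by (simp add: field_simps abs_mult[symmetric] abs_minus_commute)
        also have "\<dots> \<le> (C1 * dist x y powr \<alpha>) / (\<mu> * \<mu>)"
          using C1 x y z(2) mu unfolding \<mu>_def[symmetric]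
          by (intro frac_le mult_mono) auto
        finally show ?thesis by (simp add: power2_eq_square)
      qed
      then show ?thesis by blast
    qed
  qed
next
  fix c :: real
  show "loc_holder \<alpha> (ball 0 a) (\<lambda>x. c)" unfolding loc_holder_def by (auto intro: exI[of _ 0])
next
  fix j :: 3
  show "loc_holder \<alpha> (ball 0 a) (\<lambda>x. x $ j)" unfolding loc_holder_def
  proof (intro allI impI)
    fix K :: "(real^3) set" assume K: "compact K \<and> K \<subseteq> ball 0 a"
    obtain C where C: "C \<ge> 0" "\<forall>x\<in>K. \<forall>y\<in>K. dist x y \<le> C * dist x y powr \<alpha>"
      using dist_le_holder[of K \<alpha>] K a0 a1 by blast
    have "\<bar>x $ j - y $ j\<bar> \<le> C * dist x y powr \<alpha>" if "x \<in> K" "y \<in> K" for x y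
      using C(2) that dist_vec_nth_le[where x=x and y=y and i=j] by (force simp: dist_real_def)
    then show "\<exists>C. \<forall>x\<in>K. \<forall>y\<in>K. \<bar>x $ j - y $ j\<bar> \<le> C * dist x y powr \<alpha>" by blast
  qed
next
  fix f :: "real^3 \<Rightarrow> real" and U :: "real set" and \<phi> \<phi>' :: "real \<Rightarrow> real"
  assume F: "loc_holder \<alpha> (ball 0 a) f" and U: "convex U" "open U" "f ` ball 0 a \<subseteq> U"
    and D: "\<And>s. s \<in> U \<Longrightarrow> (\<phi> has_real_derivative \<phi>' s) (at s)" and c: "continuous_on U \<phi>'"
  show "loc_holder \<alpha> (ball 0 a) (\<lambda>x. \<phi> (f x))" unfolding loc_holder_def
  proof (intro allI impI)
    fix K :: "(real^3) set" assume K: "compact K \<and> K \<subseteq> ball 0 a"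
    obtain C1 where C1: "C1 \<ge> 0" "\<forall>x\<in>K. \<forall>y\<in>K. \<bar>f x - f y\<bar> \<le> C1 * dist x y powr \<alpha>"
      using holder_nonneg[OF F] K by blast
    define H where "H = convex hull (f ` K)"
    have cfK: "continuous_on K f" using holder_cont[OF F _ _ a0] K by blast
    have "compact (f ` K)" using compact_continuous_image[OF cfK] K by blast
    then have cH: "compact H" unfolding H_def by (rule compact_convex_hull)
    have "f ` K \<subseteq> U" using U(3) K by blast
    then have HU: "H \<subseteq> U" unfolding H_def using U(1) by (rule hull_minimal)
    have "compact (\<phi>' ` H)" using compact_continuous_image[OF continuous_on_subset[OF c HU] cH] .
    then obtain L where L: "\<forall>s\<in>H. norm (\<phi>' s) \<le> L" using compact_imp_bounded bounded_iff by (metis imageI)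
    have L0: "\<bar>\<phi> s - \<phi> t\<bar> \<le> L * \<bar>s - t\<bar>" if "s \<in> H" "t \<in> H" for s t
    proof -
      have "norm (\<phi> s - \<phi> t) \<le> L * norm (s - t)"
      proof (rule field_differentiable_bound[of H \<phi> \<phi>'])
        show "convex H" unfolding H_def by (rule convex_convex_hull)
        fix z assume "z \<in> H"
        then have "z \<in> U" using HU by blast
        then show "(\<phi> has_field_derivative \<phi>' z) (at z within H)"
          using D has_field_derivative_at_within by blast
      next
        fix z assume "z \<in> H" then show "norm (\<phi>' z) \<le> L" using L by blast
      qed (fact that)+
      then show ?thesis by simp
    qed
    have "\<bar>\<phi> (f x) - \<phi> (f y)\<bar> \<le> (max L 0 * C1) * dist x y powr \<alpha>" if x: "x \<in> K" and y: "y \<in> K" for x y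
    proof -
      have in1: "f x \<in> H" "f y \<in> H" unfolding H_def using x y hull_subset[of "f ` K" convex] by auto
      have "\<bar>\<phi> (f x) - \<phi> (f y)\<bar> \<le> L * \<bar>f x - f y\<bar>" using L0[OF in1] .
      also have "\<dots> \<le> max L 0 * \<bar>f x - f y\<bar>" by (intro mult_right_mono) auto
      also have "\<dots> \<le> max L 0 * (C1 * dist x y powr \<alpha>)" using C1 x y by (intro mult_left_mono) auto
      finally show ?thesis by (simp add: mult.assoc)
    qed
    then show "\<exists>C. \<forall>x\<in>K. \<forall>y\<in>K. \<bar>\<phi> (f x) - \<phi> (f y)\<bar> \<le> C * dist x y powr \<alpha>" by blast
  qed
qed



definition psiq :: "real poly \<Rightarrow> real \<Rightarrow> real" where
  "psiq p s = (if 0 < s then poly p (inverse s) * exp (- inverse s) else 0)"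

definition nextq :: "real poly \<Rightarrow> real poly" where
  "nextq p = [:0, 0, 1:] * (p - pderiv p)"

lemma lim_top: fixes p :: "real poly" shows "((\<lambda>u. poly p u * exp (- u)) \<longlongrightarrow> 0) at_top"
proof -
  have "((\<lambda>u. \<Sum>i\<le>degree p. coeff p i * (u ^ i / exp u)) \<longlongrightarrow> 0) at_top"
    by (intro tendsto_null_sum tendsto_mult_right_zero tendsto_power_div_exp_0)
  moreover have "poly p u * exp (- u) = (\<Sum>i\<le>degree p. coeff p i * (u ^ i / exp u))" for u :: real
    by (simp add: poly_altdef sum_distrib_right exp_minus divide_inverse mult.assoc)
  ultimately show ?thesis by simp
qed

lemma lim_right: fixes p :: "real poly" shows "((\<lambda>s. poly p (inverse s) * exp (- inverse s)) \<longlongrightarrow> 0) (at_right (0::real))"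
  using filterlim_compose[OF lim_top filterlim_inverse_at_top_right] by simp

lemma psiq_deriv_pos:
  assumes s: "0 < s"
  shows "(psiq p has_real_derivative psiq (nextq p) s) (at s)"
proof -
  have "((\<lambda>s. poly p (inverse s) * exp (- inverse s)) has_real_derivative
      poly (pderiv p) (inverse s) * (- inverse (s^2)) * exp (- inverse s)
      + poly p (inverse s) * (exp (- inverse s) * inverse (s^2))) (at s)"
  proof -
    have i: "(inverse has_real_derivative - inverse (s^2)) (at s)"
      using DERIV_inverse[of s] s by (simp add: power2_eq_square power_inverse)
    have pp: "((\<lambda>x. poly p (inverse x)) has_real_derivative poly (pderiv p) (inverse s) * (- inverse (s^2))) (at s)"
      by (rule DERIV_chain2[OF poly_DERIV i])
    have e: "((\<lambda>x. exp (- inverse x)) has_real_derivative exp (- inverse s) * (- (- inverse (s^2)))) (at s)"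
      by (rule DERIV_chain2[OF DERIV_exp DERIV_minus[OF i]])
    show ?thesis using DERIV_mult[OF pp e] by (simp add: algebra_simps)
  qed
  moreover have "poly (pderiv p) (inverse s) * (- inverse (s^2)) * exp (- inverse s)
      + poly p (inverse s) * (exp (- inverse s) * inverse (s^2)) = psiq (nextq p) s"
    using s by (simp add: psiq_def nextq_def power2_eq_square algebra_simps)
  ultimately have "((\<lambda>s. poly p (inverse s) * exp (- inverse s)) has_real_derivative psiq (nextq p) s) (at s)"
    by simp
  then show ?thesis
    by (rule has_field_derivative_transform_within_open[where S="{0<..}"]) (use s in \<open>auto simp: psiq_def\<close>)
qed

lemma psiq_deriv_neg:
  assumes s: "s < 0"
  shows "(psiq p has_real_derivative psiq q s) (at s)"
proof -
  have "((\<lambda>s. 0) has_real_derivative 0) (at s)" by simp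
  then have "(psiq p has_real_derivative 0) (at s)"
    by (rule has_field_derivative_transform_within_open[where S="{..<0}"]) (use s in \<open>auto simp: psiq_def\<close>)
  then show ?thesis using s by (simp add: psiq_def)
qed

lemma psiq_deriv_zero: "(psiq p has_real_derivative psiq q 0) (at 0)"
proof -
  have "((\<lambda>y. (psiq p y - psiq p 0) / (y - 0)) \<longlongrightarrow> 0) (at (0::real))"
  proof (rule filterlim_split_at)
    have "eventually (\<lambda>y. 0 = (psiq p y - psiq p 0) / (y - 0)) (at_left (0::real))"
      unfolding eventually_at_left_field by (intro exI[of _ "-1"]) (auto simp: psiq_def)
    then show "((\<lambda>y. (psiq p y - psiq p 0) / (y - 0)) \<longlongrightarrow> 0) (at_left 0)"
      by (rule Lim_transform_eventually[OF tendsto_const])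
  next
    have "eventually (\<lambda>y. poly (pCons 0 p) (inverse y) * exp (- inverse y) = (psiq p y - psiq p 0) / (y - 0)) (at_right (0::real))"
      unfolding eventually_at_right_field by (intro exI[of _ "1"]) (auto simp: psiq_def field_simps)
    then show "((\<lambda>y. (psiq p y - psiq p 0) / (y - 0)) \<longlongrightarrow> 0) (at_right 0)"
      by (rule Lim_transform_eventually[OF lim_right])
  qed
  then show ?thesis by (simp add: has_field_derivative_iff psiq_def)
qed

lemma psiq_deriv: "(psiq p has_real_derivative psiq (nextq p) s) (at s)"
  using psiq_deriv_pos psiq_deriv_neg psiq_deriv_zero by (cases "0 < s"; cases "s < 0") auto

primrec qs :: "nat \<Rightarrow> real poly" where
  "qs 0 = 1" | "qs (Suc n) = nextq (qs n)"

definition psis :: "nat \<Rightarrow> real \<Rightarrow> real" where "psis n = psiq (qs n)"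

lemma psis_deriv: "(psis n has_real_derivative psis (Suc n) s) (at s)"
  unfolding psis_def using psiq_deriv by simp

lemma psis0: "psis 0 s = (if 0 < s then exp (- inverse s) else 0)"
  by (simp add: psis_def psiq_def)

primrec cs :: "nat \<Rightarrow> real" where
  "cs 0 = 1" | "cs (Suc n) = cs n * (1/2 - real n)"

definition sqs :: "nat \<Rightarrow> real \<Rightarrow> real" where "sqs n t = cs n * t powr (1/2 - real n)"

lemma sqs_deriv: "t \<in> {0<..} \<Longrightarrow> (sqs n has_real_derivative sqs (Suc n) t) (at t)"
  unfolding sqs_def
  by (rule derivative_eq_intros has_real_derivative_powr refl | simp)+

lemma sqs0: "0 < t \<Longrightarrow> sqs 0 t = sqrt t"
  by (simp add: sqs_def powr_half_sqrt)



lemma norm_sq3: "norm (x::real^3) ^ 2 = x$1 * x$1 + x$2 * x$2 + x$3 * x$3"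
  by (simp add: power2_norm_eq_inner inner_vec_def sum_3)

definition Ad :: "real \<Rightarrow> real^3 \<Rightarrow> real" where "Ad d x = psis 0 (2*d - norm x ^ 2)"
definition Bd :: "real \<Rightarrow> real^3 \<Rightarrow> real" where "Bd d x = psis 0 (norm x ^ 2 - d)"
definition chi :: "real \<Rightarrow> real^3 \<Rightarrow> real" where "chi d x = Ad d x * inverse (Ad d x + Bd d x)"
definition Rho :: "real \<Rightarrow> real^3 \<Rightarrow> real" where
  "Rho d x = sqs 0 (norm x ^ 2 + psis 0 (d - norm x ^ 2)) * Bd d x * inverse (Ad d x + Bd d x)"

lemma psi_pos: "psis 0 s > 0 \<longleftrightarrow> s > 0" by (simp add: psis0)
lemma psi_nonneg: "psis 0 s \<ge> 0" by (simp add: psis0)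
lemma psi_zero: "s \<le> 0 \<Longrightarrow> psis 0 s = 0" by (simp add: psis0)

lemma AB_pos: "d > 0 \<Longrightarrow> Ad d x + Bd d x > 0"
  unfolding Ad_def Bd_def
  by (cases "norm x ^ 2 < 2 * d") (auto intro: add_pos_nonneg add_nonneg_pos simp: psi_pos psi_nonneg)

lemma chi_one: "d > 0 \<Longrightarrow> norm x ^ 2 \<le> d \<Longrightarrow> chi d x = 1"
  using AB_pos[of d x] unfolding chi_def by (simp add: Bd_def psi_zero[of "norm x ^ 2 - d"])

lemma chi_zero: "d > 0 \<Longrightarrow> norm x ^ 2 \<ge> 2 * d \<Longrightarrow> chi d x = 0"
  unfolding chi_def by (simp add: Ad_def psi_zero)

lemma chi_range: "d > 0 \<Longrightarrow> 0 \<le> chi d x \<and> chi d x \<le> 1"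
  using AB_pos[of d x] psi_nonneg unfolding chi_def Ad_def Bd_def
  by (auto simp: field_simps)

lemma Rho_eq: assumes "d > 0" shows "Rho d x = norm x * (1 - chi d x)"
proof -
  have ab: "Ad d x + Bd d x > 0" using AB_pos[OF assms] .
  have 1: "1 - chi d x = Bd d x * inverse (Ad d x + Bd d x)"
    using ab unfolding chi_def by (simp add: field_simps)
  show ?thesis
  proof (cases "Bd d x = 0")
    case True then show ?thesis using 1 by (simp add: Rho_def)
  next
    case False
    then have "norm x ^ 2 > d" unfolding Bd_def using psi_zero[of "norm x ^ 2 - d"] by linarith
    then have "psis 0 (d - norm x ^ 2) = 0" "norm x ^ 2 > 0" using assms by (auto intro: psi_zero)
    then have "sqs 0 (norm x ^ 2 + psis 0 (d - norm x ^ 2)) = norm x"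
      by (simp add: sqs0)
    then show ?thesis unfolding Rho_def 1 by simp
  qed
qed

context Qloc begin

lemma Q_nsq: "Q m (\<lambda>x. norm x ^ 2)"
proof -
  have "Q m (\<lambda>x. x$1 * x$1 + x$2 * x$2 + x$3 * x$3)"
    by (intro Q_add Q_mult Q_coord)
  then show ?thesis by (rule Q_cong) (simp add: norm_sq3)
qed

lemma Q_psi: "Q m g \<Longrightarrow> Q m (\<lambda>x. psis 0 (g x))"
  by (rule Q_comp[of UNIV]) (auto intro: psis_deriv)

lemma Q_sqs: "Q m g \<Longrightarrow> (\<And>x. x \<in> ball 0 a \<Longrightarrow> g x > 0) \<Longrightarrow> Q m (\<lambda>x. sqs 0 (g x))"
  by (rule Q_comp[of "{0<..}"]) (auto intro: sqs_deriv)

lemma Q_Ad: "Q m (Ad d)"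
proof -
  have "Q m (\<lambda>x. psis 0 (2*d - norm x ^ 2))" by (intro Q_psi Q_minus Q_const Q_nsq)
  then show ?thesis by (simp add: Ad_def[abs_def])
qed

lemma Q_Bd: "Q m (Bd d)"
proof -
  have "Q m (\<lambda>x. psis 0 (norm x ^ 2 - d))" by (intro Q_psi Q_minus Q_const Q_nsq)
  then show ?thesis by (simp add: Bd_def[abs_def])
qed

lemma Q_invAB: "d > 0 \<Longrightarrow> Q m (\<lambda>x. inverse (Ad d x + Bd d x))"
proof -
  assume d: "d > 0"
  show ?thesis using AB_pos[OF d] by (intro Q_inv Q_add Q_Ad Q_Bd) (metis less_irrefl)
qed

lemma Q_chi: "d > 0 \<Longrightarrow> Q m (chi d)"
proof -
  assume d: "d > 0"
  have "Q m (\<lambda>x. Ad d x * inverse (Ad d x + Bd d x))" by (intro Q_mult Q_Ad Q_invAB d)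
  then show ?thesis by (simp add: chi_def[abs_def])
qed

lemma Q_Rho: "d > 0 \<Longrightarrow> Q m (Rho d)"
proof -
  assume d: "d > 0"
  have g: "Q m (\<lambda>x. sqs 0 (norm x ^ 2 + psis 0 (d - norm x ^ 2)))"
  proof (rule Q_sqs)
    show "Q m (\<lambda>x. norm x ^ 2 + psis 0 (d - norm x ^ 2))" by (intro Q_add Q_nsq Q_psi Q_minus Q_const)
    fix x :: "real^3"
    show "norm x ^ 2 + psis 0 (d - norm x ^ 2) > 0"
    proof (cases "norm x = 0")
      case True then show ?thesis using d by (simp add: psi_pos)
    next
      case False then show ?thesis using psi_nonneg[of "d - norm x ^ 2"] by (simp add: add_pos_nonneg)
    qed
  qed
  have "Q m (\<lambda>x. sqs 0 (norm x ^ 2 + psis 0 (d - norm x ^ 2)) * Bd d x * inverse (Ad d x + Bd d x))"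
    by (intro Q_mult g Q_Bd Q_invAB d)
  then show ?thesis by (simp add: Rho_def[abs_def])
qed

end


context Qloc begin

lemma E_inv_construct:
  assumes c1: "continuous_on (ball 0 a) f1" and c2: "continuous_on (ball 0 a) f2"
    and nz: "\<forall>x\<in>ball 0 a. f1 x + norm x * f2 x \<noteq> 0"
  shows "\<exists>g1 g2. (\<forall>m. Q m f1 \<longrightarrow> Q m f2 \<longrightarrow> Q m g1 \<and> Q m g2) \<and>
     (\<forall>x\<in>ball 0 a. inverse (f1 x + norm x * f2 x) = g1 x + norm x * g2 x)"
proof (cases "a > 0")
  case False
  then have "ball (0::real^3) a = {}" by simp
  then show ?thesis by (intro exI[of _ f1] exI[of _ f2]) (simp only: ball_empty, simp)
next
  case True
  then have z: "(0::real^3) \<in> ball 0 a" by simp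
  define h where "h x = \<bar>f1 x\<bar> - norm x * \<bar>f2 x\<bar>" for x :: "real^3"
  have ch: "continuous_on (ball 0 a) h" unfolding h_def using c1 c2 by (intro continuous_intros)
  have h0: "h 0 > 0" using nz[rule_format, OF z] unfolding h_def by simp
  obtain \<epsilon> where e: "\<epsilon> > 0" "\<forall>x\<in>ball 0 a. dist x 0 < \<epsilon> \<longrightarrow> dist (h x) (h 0) < h 0"
    using ch z h0 unfolding continuous_on_iff by blast
  define \<delta> where "\<delta> = \<epsilon>^2 / 16"
  have dpos: "\<delta> > 0" using e by (simp add: \<delta>_def)
  have key: "\<bar>f1 x\<bar> > norm x * \<bar>f2 x\<bar>" if x: "x \<in> ball 0 a" and t: "norm x ^ 2 < 16 * \<delta>" for x
  proof -
    have "norm x ^ 2 < \<epsilon> ^ 2" using t by (simp add: \<delta>_def)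
    then have "norm x < \<epsilon>" using e(1) by (simp add: power_less_imp_less_base)
    then have "dist (h x) (h 0) < h 0" using e(2) x by simp
    then have "h x > 0" by (simp add: dist_real_def)
    then show ?thesis unfolding h_def by simp
  qed
  define F where "F x = f1 x + Rho \<delta> x * f2 x" for x
  define Dt where "Dt x = chi (8*\<delta>) x * (f1 x * f1 x - norm x ^ 2 * (f2 x * f2 x)) + (1 - chi (8*\<delta>) x)" for x
  define g1 where "g1 x = (1 - chi (4*\<delta>) x) * inverse (F x) + chi (4*\<delta>) x * f1 x * inverse (Dt x)" for x
  define g2 where "g2 x = - (chi (4*\<delta>) x * f2 x * inverse (Dt x))" for x
  have d4: "4 * \<delta> > 0" and d8: "8 * \<delta> > 0" using dpos by auto
  have Fnz: "F x \<noteq> 0" if x: "x \<in> ball 0 a" for x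
  proof (cases "norm x ^ 2 \<ge> 2 * \<delta>")
    case True
    then have "chi \<delta> x = 0" using chi_zero dpos by blast
    then show ?thesis using nz x unfolding F_def Rho_eq[OF dpos] by simp
  next
    case False
    then have k: "\<bar>f1 x\<bar> > norm x * \<bar>f2 x\<bar>" using key[OF x] dpos by simp
    have "\<bar>Rho \<delta> x * f2 x\<bar> = norm x * (1 - chi \<delta> x) * \<bar>f2 x\<bar>"
      using chi_range[OF dpos, of x] by (simp add: Rho_eq[OF dpos] abs_mult)
    also have "\<dots> = norm x * (\<bar>f2 x\<bar> * (1 - chi \<delta> x))" by simp
    also have "\<dots> \<le> norm x * \<bar>f2 x\<bar>"
      using chi_range[OF dpos, of x] by (intro mult_left_mono mult_right_le_one_le) auto
    finally show ?thesis using k unfolding F_def by linarith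
  qed
  have Dpos: "f1 x * f1 x - norm x ^ 2 * (f2 x * f2 x) > 0"
    if x: "x \<in> ball 0 a" and t: "norm x ^ 2 < 16 * \<delta>" for x
  proof -
    have k: "\<bar>f1 x\<bar> > norm x * \<bar>f2 x\<bar>" using key[OF x t] .
    have "(norm x * \<bar>f2 x\<bar>)^2 < \<bar>f1 x\<bar>^2"
      using k by (intro power_strict_mono) auto
    then show ?thesis by (simp add: power2_eq_square abs_mult_self algebra_simps)
  qed
  have Dtpos: "Dt x > 0" if x: "x \<in> ball 0 a" for x
  proof (cases "norm x ^ 2 < 16 * \<delta>")
    case True
    have D: "f1 x * f1 x - norm x ^ 2 * (f2 x * f2 x) > 0" using Dpos[OF x True] .
    have r: "0 \<le> chi (8*\<delta>) x" "chi (8*\<delta>) x \<le> 1" using chi_range[OF d8] by auto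
    show ?thesis
    proof (cases "chi (8*\<delta>) x = 0")
      case True then show ?thesis unfolding Dt_def by simp
    next
      case False
      then have "chi (8*\<delta>) x * (f1 x * f1 x - norm x ^ 2 * (f2 x * f2 x)) > 0" using r D by simp
      then show ?thesis using r unfolding Dt_def by linarith
    qed
  next
    case False
    then have "chi (8*\<delta>) x = 0" using chi_zero[OF d8, of x] by simp
    then show ?thesis unfolding Dt_def by simp
  qed
  have Qg: "Q m g1 \<and> Q m g2" if "Q m f1" "Q m f2" for m
  proof
    have QF: "Q m F" unfolding F_def[abs_def] using that by (intro Q_add Q_mult Q_Rho dpos)
    have QD: "Q m Dt" unfolding Dt_def[abs_def] using that
      by (intro Q_add Q_mult Q_minus Q_chi Q_const d8 Q_nsq)
    have QiF: "Q m (\<lambda>x. inverse (F x))" using QF Fnz by (rule Q_inv)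
    have QiD: "Q m (\<lambda>x. inverse (Dt x))" using QD by (rule Q_inv) (use Dtpos in force)
    show "Q m g1" unfolding g1_def[abs_def] using that QiF QiD
      by (intro Q_add Q_mult Q_minus Q_chi Q_const d4)
    show "Q m g2" unfolding g2_def[abs_def] using that QiD
      by (intro Q_uminus Q_mult Q_chi d4)
  qed
  have eq: "inverse (f1 x + norm x * f2 x) = g1 x + norm x * g2 x" if x: "x \<in> ball 0 a" for x
  proof -
    define r where "r = norm x"
    have t: "norm x ^ 2 = r * r" by (simp add: r_def power2_eq_square)
    have f0: "f1 x + r * f2 x \<noteq> 0" using nz x by (simp add: r_def)
    show ?thesis
    proof (cases "norm x ^ 2 \<le> 4 * \<delta>")
      case True
      have c4: "chi (4*\<delta>) x = 1" using chi_one[OF d4 True] .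
      have c8: "chi (8*\<delta>) x = 1" using chi_one[OF d8] True dpos by simp
      have k: "\<bar>f1 x\<bar> > r * \<bar>f2 x\<bar>" using key[OF x] True dpos by (simp add: r_def)
      have r0: "r \<ge> 0" by (simp add: r_def)
      have fm: "f1 x - r * f2 x \<noteq> 0" using k r0 by (auto simp: abs_mult)
      have DD: "Dt x = (f1 x - r * f2 x) * (f1 x + r * f2 x)"
        unfolding Dt_def c8 t by (simp add: algebra_simps)
      have "g1 x + norm x * g2 x = (f1 x - r * f2 x) * inverse ((f1 x - r * f2 x) * (f1 x + r * f2 x))"
        unfolding g1_def g2_def c4 DD r_def[symmetric] by (simp add: algebra_simps)
      also have "\<dots> = inverse (f1 x + r * f2 x)" using fm by (simp add: inverse_mult_distrib)
      finally show ?thesis by (simp add: r_def)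
    next
      case False
      have c1: "chi \<delta> x = 0" using chi_zero[OF dpos, of x] False dpos by simp
      have FF: "F x = f1 x + r * f2 x" unfolding F_def Rho_eq[OF dpos] c1 by (simp add: r_def)
      show ?thesis
      proof (cases "norm x ^ 2 \<le> 8 * \<delta>")
        case True
        have c8: "chi (8*\<delta>) x = 1" using chi_one[OF d8 True] .
        have DD: "Dt x = (f1 x - r * f2 x) * (f1 x + r * f2 x)"
          unfolding Dt_def c8 t by (simp add: algebra_simps)
        have fm: "f1 x - r * f2 x \<noteq> 0" using Dtpos[OF x] DD by auto
        have "g1 x + norm x * g2 x = (1 - chi (4*\<delta>) x) * inverse (f1 x + r * f2 x)
            + chi (4*\<delta>) x * ((f1 x - r * f2 x) * inverse ((f1 x - r * f2 x) * (f1 x + r * f2 x)))"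
          unfolding g1_def g2_def FF DD r_def[symmetric] by (simp add: algebra_simps)
        also have "(f1 x - r * f2 x) * inverse ((f1 x - r * f2 x) * (f1 x + r * f2 x)) = inverse (f1 x + r * f2 x)"
          using fm by (simp add: inverse_mult_distrib)
        also have "(1 - chi (4*\<delta>) x) * inverse (f1 x + r * f2 x) + chi (4*\<delta>) x * inverse (f1 x + r * f2 x) = inverse (f1 x + r * f2 x)"
          by (simp add: algebra_simps)
        finally show ?thesis by (simp add: r_def)
      next
        case False
        have c4: "chi (4*\<delta>) x = 0" using chi_zero[OF d4, of x] False by simp
        show ?thesis unfolding g1_def g2_def FF c4 by (simp add: r_def)
      qed
    qed
  qed
  show ?thesis using Qg eq by blast
qed

end


context Qloc begin

lemma Q_P: "Q m f \<Longrightarrow> P f"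
  unfolding Q_def by (metis le0 list.size(3) pderivs3.simps(1))

lemma Q_cont: "Q (Suc m) f \<Longrightarrow> continuous_on (ball 0 a) f"
  unfolding Q_Suc
  by (intro continuous_at_imp_continuous_on ballI differentiable_imp_continuous_within) auto

lemma E_sum_prod:
  assumes "Q m f1" "Q m f2" "Q m g1" "Q m g2"
  shows "Q m (\<lambda>x. f1 x + g1 x) \<and> Q m (\<lambda>x. f2 x + g2 x) \<and>
    Q m (\<lambda>x. f1 x * g1 x + norm x ^ 2 * (f2 x * g2 x)) \<and> Q m (\<lambda>x. f1 x * g2 x + f2 x * g1 x)"
  using assms by (intro conjI Q_add Q_mult Q_nsq)

end

lemma prod_id: "((f1::real) + r * f2) * (g1 + r * g2) = (f1 * g1 + r ^ 2 * (f2 * g2)) + r * (f1 * g2 + f2 * g1)"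
  by (simp add: algebra_simps power2_eq_square)

lemma CH_eq: "0 < \<alpha> \<Longrightarrow> \<alpha> \<le> 1 \<Longrightarrow> C_holder m \<alpha> (ball 0 a) f = Qloc.Q (loc_holder \<alpha> (ball 0 a)) a m f"
  by (simp add: C_holder_def Qloc.Q_def[OF holder_Qloc])

lemma true_Qloc: "Qloc (\<lambda>_. True) a"
  by unfold_locales auto

lemma CI_eq: "C_inf (ball 0 a) f = (\<forall>m. Qloc.Q (\<lambda>_. True) a m f)"
  unfolding C_inf_def Qloc.Q_def[OF true_Qloc]
proof (intro iffI allI conjI impI)
  fix "is" :: "3 list"
  assume "\<forall>m. (\<forall>is. length is < m \<longrightarrow> (\<forall>x\<in>ball 0 a. pderivs3 is f differentiable at x)) \<and> (\<forall>is. length is \<le> m \<longrightarrow> True)"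
  then show "\<forall>x\<in>ball 0 a. pderivs3 is f differentiable at x"
    by (metis lessI)
qed auto

theorem lemma2:
  fixes m :: nat and \<alpha> a :: real
  assumes "0 < \<alpha>" and "\<alpha> < 1"
  shows "(\<forall>f g. E_holder m \<alpha> a f \<and> E_holder m \<alpha> a g \<longrightarrow>
            E_holder m \<alpha> a (\<lambda>x. f x + g x) \<and> E_holder m \<alpha> a (\<lambda>x. f x * g x)) \<and>
         (\<forall>f. E_holder m \<alpha> a f \<and> (\<forall>x\<in>ball 0 a. f x \<noteq> 0) \<longrightarrow>
            E_holder m \<alpha> a (\<lambda>x. 1 / f x)) \<and>
         (\<forall>f g. E_inf a f \<and> E_inf a g \<longrightarrow>
            E_inf a (\<lambda>x. f x + g x) \<and> E_inf a (\<lambda>x. f x * g x)) \<and>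
         (\<forall>f. E_inf a f \<and> (\<forall>x\<in>ball 0 a. f x \<noteq> 0) \<longrightarrow>
            E_inf a (\<lambda>x. 1 / f x))"
proof -
  interpret H: Qloc "loc_holder \<alpha> (ball 0 a)" a using holder_Qloc assms by simp
  interpret T: Qloc "\<lambda>_. True" a by (rule true_Qloc)
  have a1: "\<alpha> \<le> 1" using assms by simp
  note CH_eq = CH_eq[OF assms(1) a1]
  have P1: "E_holder m \<alpha> a (\<lambda>x. f x + g x) \<and> E_holder m \<alpha> a (\<lambda>x. f x * g x)"
    if hf: "E_holder m \<alpha> a f" and hg: "E_holder m \<alpha> a g" for f g
  proof -
    obtain f1 f2 where F: "H.Q m f1" "H.Q m f2" "\<forall>x\<in>ball 0 a. f x = f1 x + norm x * f2 x"
      using hf unfolding E_holder_def CH_eq by blast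
    obtain g1 g2 where G: "H.Q m g1" "H.Q m g2" "\<forall>x\<in>ball 0 a. g x = g1 x + norm x * g2 x"
      using hg unfolding E_holder_def CH_eq by blast
    note S = H.E_sum_prod[OF F(1,2) G(1,2)]
    show ?thesis unfolding E_holder_def CH_eq
    proof (intro conjI)
      show "\<exists>h1 h2. H.Q m h1 \<and> H.Q m h2 \<and> (\<forall>x\<in>ball 0 a. f x + g x = h1 x + norm x * h2 x)"
        using S F(3) G(3) by (intro exI[of _ "\<lambda>x. f1 x + g1 x"] exI[of _ "\<lambda>x. f2 x + g2 x"] conjI) (auto simp: algebra_simps)
      show "\<exists>h1 h2. H.Q m h1 \<and> H.Q m h2 \<and> (\<forall>x\<in>ball 0 a. f x * g x = h1 x + norm x * h2 x)"
        using S F(3) G(3) by (intro exI[of _ "\<lambda>x. f1 x * g1 x + norm x ^ 2 * (f2 x * g2 x)"] exI[of _ "\<lambda>x. f1 x * g2 x + f2 x * g1 x"] conjI) (auto simp: prod_id)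
    qed
  qed
  have P2: "E_holder m \<alpha> a (\<lambda>x. 1 / f x)"
    if hf: "E_holder m \<alpha> a f" and hnz: "\<forall>x\<in>ball 0 a. f x \<noteq> 0" for f
  proof -
    obtain f1 f2 where F: "H.Q m f1" "H.Q m f2" "\<forall>x\<in>ball 0 a. f x = f1 x + norm x * f2 x"
      using hf unfolding E_holder_def CH_eq by blast
    have c1: "continuous_on (ball 0 a) f1" using holder_cont_open[OF H.Q_P[OF F(1)] _ assms(1)] by simp
    have c2: "continuous_on (ball 0 a) f2" using holder_cont_open[OF H.Q_P[OF F(2)] _ assms(1)] by simp
    have nz: "\<forall>x\<in>ball 0 a. f1 x + norm x * f2 x \<noteq> 0" using hnz F(3) by auto
    obtain g1 g2 where G: "\<forall>m. H.Q m f1 \<longrightarrow> H.Q m f2 \<longrightarrow> H.Q m g1 \<and> H.Q m g2"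
      "\<forall>x\<in>ball 0 a. inverse (f1 x + norm x * f2 x) = g1 x + norm x * g2 x"
      using H.E_inv_construct[OF c1 c2 nz] by blast
    show ?thesis unfolding E_holder_def CH_eq
      using G F by (intro exI[of _ g1] exI[of _ g2]) (auto simp: divide_inverse)
  qed
  have P3: "E_inf a (\<lambda>x. f x + g x) \<and> E_inf a (\<lambda>x. f x * g x)"
    if hf: "E_inf a f" and hg: "E_inf a g" for f g
  proof -
    obtain f1 f2 where F: "\<forall>m. T.Q m f1" "\<forall>m. T.Q m f2" "\<forall>x\<in>ball 0 a. f x = f1 x + norm x * f2 x"
      using hf unfolding E_inf_def CI_eq by blast
    obtain g1 g2 where G: "\<forall>m. T.Q m g1" "\<forall>m. T.Q m g2" "\<forall>x\<in>ball 0 a. g x = g1 x + norm x * g2 x"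
      using hg unfolding E_inf_def CI_eq by blast
    have S: "\<And>m. T.Q m (\<lambda>x. f1 x + g1 x) \<and> T.Q m (\<lambda>x. f2 x + g2 x) \<and>
      T.Q m (\<lambda>x. f1 x * g1 x + norm x ^ 2 * (f2 x * g2 x)) \<and> T.Q m (\<lambda>x. f1 x * g2 x + f2 x * g1 x)"
      using F G by (intro T.E_sum_prod) auto
    show ?thesis unfolding E_inf_def CI_eq
    proof (intro conjI)
      show "\<exists>h1 h2. (\<forall>m. T.Q m h1) \<and> (\<forall>m. T.Q m h2) \<and> (\<forall>x\<in>ball 0 a. f x + g x = h1 x + norm x * h2 x)"
        using S F(3) G(3) by (intro exI[of _ "\<lambda>x. f1 x + g1 x"] exI[of _ "\<lambda>x. f2 x + g2 x"] conjI) (auto simp: algebra_simps)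
      show "\<exists>h1 h2. (\<forall>m. T.Q m h1) \<and> (\<forall>m. T.Q m h2) \<and> (\<forall>x\<in>ball 0 a. f x * g x = h1 x + norm x * h2 x)"
        using S F(3) G(3) by (intro exI[of _ "\<lambda>x. f1 x * g1 x + norm x ^ 2 * (f2 x * g2 x)"] exI[of _ "\<lambda>x. f1 x * g2 x + f2 x * g1 x"] conjI) (auto simp: prod_id)
    qed
  qed
  have P4: "E_inf a (\<lambda>x. 1 / f x)"
    if hf: "E_inf a f" and hnz: "\<forall>x\<in>ball 0 a. f x \<noteq> 0" for f
  proof -
    obtain f1 f2 where F: "\<forall>m. T.Q m f1" "\<forall>m. T.Q m f2" "\<forall>x\<in>ball 0 a. f x = f1 x + norm x * f2 x"
      using hf unfolding E_inf_def CI_eq by blast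
    have c1: "continuous_on (ball 0 a) f1" using T.Q_cont F(1) by blast
    have c2: "continuous_on (ball 0 a) f2" using T.Q_cont F(2) by blast
    have nz: "\<forall>x\<in>ball 0 a. f1 x + norm x * f2 x \<noteq> 0" using hnz F(3) by auto
    obtain g1 g2 where G: "\<forall>m. T.Q m f1 \<longrightarrow> T.Q m f2 \<longrightarrow> T.Q m g1 \<and> T.Q m g2"
      "\<forall>x\<in>ball 0 a. inverse (f1 x + norm x * f2 x) = g1 x + norm x * g2 x"
      using T.E_inv_construct[OF c1 c2 nz] by blast
    show ?thesis unfolding E_inf_def CI_eq
      using G F by (intro exI[of _ g1] exI[of _ g2]) (auto simp: divide_inverse)
  qed
  show ?thesis using P1 P2 P3 P4 by blast
qed


end
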